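(* Assume that there exists a disjoint stationary sequence on $\omega_2$. Then the $\omega_1$-approachability property fails.
   Context: For an uncountable ordinal $\alpha < \omega_2$, $P_{\omega_1}(\alpha)$ is the set of countable subsets of $\alpha$; a set $c \subseteq P_{\omega_1}(\alpha)$ is club if it is cofinal (under $\subseteq$) and closed under unions of countable increasing sequences, and $s \subseteq P_{\omega_1}(\alpha)$ is stationary if it meets every club in $P_{\omega_1}(\alpha)$. A disjoint stationary sequence on $\omega_2$ is a sequence $\langle s_\alpha : \alpha \in S \rangle$, where $S$ is a stationary subset of $\omega_2 \cap \mathrm{cof}(\omega_1)$, such that each $s_\alpha$ is a stationary subset of $P_{\omega_1}(\alpha)$ and $s_\alpha \cap s_\beta = \emptyset$ for all $\alpha < \beta$ in $S$. The $\omega_1$-approachability property is the statement that there exist a sequence $\langle a_i : i < \omega_2 \rangle$ of countable subsets of $\omega_2$ and a club $C \subseteq \omega_2$ such that for every limit ordinal $\alpha \in C$ there is a cofinal set $c \subseteq \alpha$ of order type $\mathrm{cf}(\alpha)$ such that for all $\beta < \alpha$, $c \cap \beta \in \{ a_i : i < \alpha \}$. *)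

theory Defs
  imports Main "HOL-Library.Countable_Set"
begin

(* Ordinals below omega_2 are modelled by the elements of a type 'a carrying a
   well-order r of order type omega_2 (Field r = UNIV).  An ordinal \<alpha> is
   identified with the set of its predecessors  underS r \<alpha>. *)

definition lt :: "'a rel \<Rightarrow> 'a \<Rightarrow> 'a \<Rightarrow> bool" where
  "lt r x y \<longleftrightarrow> (x, y) \<in> r \<and> x \<noteq> y"

definition le_aleph1 :: "'b set \<Rightarrow> bool" where
  "le_aleph1 X \<longleftrightarrow> (\<exists>w. Well_order w \<and> Field w = X \<and> (\<forall>x\<in>X. countable (underS w x)))"

definition omega2_order :: "'a rel \<Rightarrow> bool" where
  "omega2_order r \<longleftrightarrow> Well_order r \<and> Field r = UNIV \<and>
     (\<forall>a. le_aleph1 (underS r a)) \<and> \<not> le_aleph1 (UNIV :: 'a set)"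

definition unbounded :: "'a rel \<Rightarrow> 'a set \<Rightarrow> bool" where
  "unbounded r C \<longleftrightarrow> (\<forall>\<beta>. \<exists>\<gamma>\<in>C. lt r \<beta> \<gamma>)"

definition closed :: "'a rel \<Rightarrow> 'a set \<Rightarrow> bool" where
  "closed r C \<longleftrightarrow> (\<forall>\<alpha>. (underS r \<alpha> \<noteq> {} \<and>
       (\<forall>\<beta>\<in>underS r \<alpha>. \<exists>\<gamma>\<in>C. lt r \<beta> \<gamma> \<and> lt r \<gamma> \<alpha>)) \<longrightarrow> \<alpha> \<in> C)"

definition club :: "'a rel \<Rightarrow> 'a set \<Rightarrow> bool" where
  "club r C \<longleftrightarrow> unbounded r C \<and> closed r C"

definition stationary :: "'a rel \<Rightarrow> 'a set \<Rightarrow> bool" where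
  "stationary r S \<longleftrightarrow> (\<forall>C. club r C \<longrightarrow> S \<inter> C \<noteq> {})"

definition limit :: "'a rel \<Rightarrow> 'a \<Rightarrow> bool" where
  "limit r \<alpha> \<longleftrightarrow> underS r \<alpha> \<noteq> {} \<and> (\<forall>\<beta>\<in>underS r \<alpha>. \<exists>\<gamma>. lt r \<beta> \<gamma> \<and> lt r \<gamma> \<alpha>)"

definition cofinal_in :: "'a rel \<Rightarrow> 'a set \<Rightarrow> 'a \<Rightarrow> bool" where
  "cofinal_in r c \<alpha> \<longleftrightarrow> c \<subseteq> underS r \<alpha> \<and> (\<forall>\<beta>\<in>underS r \<alpha>. \<exists>\<gamma>\<in>c. (\<beta>, \<gamma>) \<in> r)"

definition otp_omega :: "'a rel \<Rightarrow> 'a set \<Rightarrow> bool" where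
  "otp_omega r c \<longleftrightarrow> infinite c \<and> (\<forall>\<gamma>\<in>c. finite {\<delta>\<in>c. lt r \<delta> \<gamma>})"

definition otp_omega1 :: "'a rel \<Rightarrow> 'a set \<Rightarrow> bool" where
  "otp_omega1 r c \<longleftrightarrow> uncountable c \<and> (\<forall>\<gamma>\<in>c. countable {\<delta>\<in>c. lt r \<delta> \<gamma>})"

definition cof_omega :: "'a rel \<Rightarrow> 'a \<Rightarrow> bool" where
  "cof_omega r \<alpha> \<longleftrightarrow> (\<exists>c. cofinal_in r c \<alpha> \<and> otp_omega r c) \<and>
      (\<forall>c. cofinal_in r c \<alpha> \<longrightarrow> infinite c)"

definition cof_omega1 :: "'a rel \<Rightarrow> 'a \<Rightarrow> bool" where
  "cof_omega1 r \<alpha> \<longleftrightarrow> (\<exists>c. cofinal_in r c \<alpha> \<and> otp_omega1 r c) \<and>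
      (\<forall>c. cofinal_in r c \<alpha> \<longrightarrow> uncountable c)"

definition Pw1 :: "'a rel \<Rightarrow> 'a \<Rightarrow> 'a set set" where
  "Pw1 r \<alpha> = {x. x \<subseteq> underS r \<alpha> \<and> countable x}"

definition club_P :: "'a rel \<Rightarrow> 'a \<Rightarrow> 'a set set \<Rightarrow> bool" where
  "club_P r \<alpha> c \<longleftrightarrow> c \<subseteq> Pw1 r \<alpha> \<and>
     (\<forall>x\<in>Pw1 r \<alpha>. \<exists>y\<in>c. x \<subseteq> y) \<and>
     (\<forall>f :: nat \<Rightarrow> 'a set. (\<forall>n. f n \<in> c) \<and> (\<forall>n. f n \<subseteq> f (Suc n)) \<longrightarrow> \<Union>(range f) \<in> c)"

definition stationary_P :: "'a rel \<Rightarrow> 'a \<Rightarrow> 'a set set \<Rightarrow> bool" where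
  "stationary_P r \<alpha> s \<longleftrightarrow> s \<subseteq> Pw1 r \<alpha> \<and> (\<forall>c. club_P r \<alpha> c \<longrightarrow> s \<inter> c \<noteq> {})"

definition disjoint_stationary_sequence :: "'a rel \<Rightarrow> 'a set \<Rightarrow> ('a \<Rightarrow> 'a set set) \<Rightarrow> bool" where
  "disjoint_stationary_sequence r S s \<longleftrightarrow>
     S \<subseteq> {\<alpha>. cof_omega1 r \<alpha>} \<and> stationary r S \<and>
     (\<forall>\<alpha>\<in>S. stationary_P r \<alpha> (s \<alpha>)) \<and>
     (\<forall>\<alpha>\<in>S. \<forall>\<beta>\<in>S. lt r \<alpha> \<beta> \<longrightarrow> s \<alpha> \<inter> s \<beta> = {})"

definition approachability_omega1 :: "'a rel \<Rightarrow> bool" where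
  "approachability_omega1 r \<longleftrightarrow>
     (\<exists>(a :: 'a \<Rightarrow> 'a set) C. (\<forall>i. countable (a i)) \<and> club r C \<and>
        (\<forall>\<alpha>\<in>C. limit r \<alpha> \<longrightarrow>
           (\<exists>c. cofinal_in r c \<alpha> \<and>
                ((cof_omega r \<alpha> \<and> otp_omega r c) \<or> (cof_omega1 r \<alpha> \<and> otp_omega1 r c)) \<and>
                (\<forall>\<beta>\<in>underS r \<alpha>. c \<inter> underS r \<beta> \<in> a ` underS r \<alpha>))))"

end

theory Submission
  imports Defs "HOL-Library.Countable_Set_Type"
begin
unbundle cardinal_syntax

locale W = fixes r :: "'a rel" assumes om: "omega2_order r"
begin

lemma WO: "Well_order r" using om unfolding omega2_order_def by auto
lemma FU: "Field r = UNIV" using om unfolding omega2_order_def by auto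
lemma rrefl: "(x,x) \<in> r" using WO FU unfolding order_on_defs refl_on_def by auto
lemma rtotal: "(x,y) \<in> r \<or> (y,x) \<in> r"
  using WO FU rrefl unfolding order_on_defs total_on_def by (cases "x = y") auto
lemma rantisym: "(x,y) \<in> r \<Longrightarrow> (y,x) \<in> r \<Longrightarrow> x = y"
  using WO unfolding order_on_defs antisym_def by auto
lemma rtrans: "(x,y) \<in> r \<Longrightarrow> (y,z) \<in> r \<Longrightarrow> (x,z) \<in> r"
  using WO unfolding order_on_defs trans_def by blast
lemma uS: "x \<in> underS r y \<longleftrightarrow> lt r x y" unfolding underS_def lt_def by auto
lemma lt_trans: "lt r x y \<Longrightarrow> lt r y z \<Longrightarrow> lt r x z"
  unfolding lt_def using rtrans rantisym by blast
lemma lt_le_trans: "lt r x y \<Longrightarrow> (y,z) \<in> r \<Longrightarrow> lt r x z"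
  unfolding lt_def using rtrans rantisym by blast
lemma le_lt_trans: "(x,y) \<in> r \<Longrightarrow> lt r y z \<Longrightarrow> lt r x z"
  unfolding lt_def using rtrans rantisym by blast
lemma not_le: "(x,y) \<notin> r \<Longrightarrow> lt r y x" unfolding lt_def using rtotal rrefl by metis
lemma lt_not_le: "lt r x y \<Longrightarrow> (y,x) \<notin> r" unfolding lt_def using rantisym by blast
lemma lt_irrefl: "\<not> lt r x x" unfolding lt_def by auto
lemma lt_le: "lt r x y \<Longrightarrow> (x,y) \<in> r" unfolding lt_def by auto

lemma exmin: assumes "x \<in> A" shows "\<exists>m\<in>A. \<forall>y\<in>A. (m,y) \<in> r"
proof -
  have wf: "wf (r - Id)" using WO unfolding order_on_defs well_order_on_def by auto
  obtain m where m: "m \<in> A" "\<forall>y. (y,m) \<in> r - Id \<longrightarrow> y \<notin> A"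
    using wf[unfolded wf_eq_minimal] assms by blast
  have "\<forall>y\<in>A. (m,y) \<in> r" using m rtotal by blast
  thus ?thesis using m by blast
qed

definition Om where "Om = {\<xi>. countable (underS r \<xi>)}"

lemma Om_down: "\<xi> \<in> Om \<Longrightarrow> lt r \<eta> \<xi> \<Longrightarrow> \<eta> \<in> Om"
proof -
  assume a: "\<xi> \<in> Om" "lt r \<eta> \<xi>"
  have "underS r \<eta> \<subseteq> underS r \<xi>" using a(2) by (auto simp: uS intro: lt_trans)
  thus ?thesis using a(1) countable_subset unfolding Om_def by auto
qed

lemma le_aleph1_r: "le_aleph1 (UNIV::'a set) \<Longrightarrow> False"
  using om unfolding omega2_order_def by auto

lemma Om_uncountable: "uncountable Om"
proof
  assume c: "countable Om"
  show False
  proof (cases "Om = UNIV")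
    case True
    hence "\<forall>x. countable (underS r x)" unfolding Om_def by auto
    hence "le_aleph1 (UNIV::'a set)" unfolding le_aleph1_def using WO FU by blast
    thus False using le_aleph1_r by auto
  next
    case False
    then obtain z where "z \<in> - Om" by auto
    then obtain m where m: "m \<in> - Om" "\<forall>y\<in> - Om. (m,y) \<in> r" using exmin by blast
    have "underS r m \<subseteq> Om"
    proof
      fix x assume "x \<in> underS r m"
      hence "lt r x m" by (simp add: uS)
      thus "x \<in> Om" using m lt_not_le by blast
    qed
    hence "m \<in> Om" using c countable_subset unfolding Om_def by auto
    thus False using m by auto
  qed
qed

lemma Om_infinite: "infinite Om" using Om_uncountable countable_finite by auto

lemma countable_small: "countable X \<Longrightarrow> |X| \<le>o |Om|"
proof -
  assume "countable X"
  hence "|X| \<le>o natLeq" using countable_card_le_natLeq by blast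
  moreover have "natLeq \<le>o |Om|" using infinite_iff_natLeq_ordLeq Om_infinite by blast
  ultimately show ?thesis by (rule ordLeq_transitive)
qed

lemma le_aleph1_small: assumes "le_aleph1 X" shows "|X| \<le>o |Om|"
proof -
  obtain w where w: "Well_order w" "Field w = X" "\<forall>x\<in>X. countable (underS w x)"
    using assms unfolding le_aleph1_def by auto
  define \<rho> where "\<rho> = Restr r Om"
  have wr: "Well_order \<rho>" unfolding \<rho>_def using WO Well_order_Restr by blast
  have fr: "Field \<rho> = Om" unfolding \<rho>_def using WO FU Refl_Field_Restr2[of r Om]
    unfolding order_on_defs by auto
  from ordLess_or_ordLeq[OF wr w(1)] show ?thesis
  proof
    assume "\<rho> <o w"
    then obtain a where a: "a \<in> Field w" "\<rho> =o Restr w (underS w a)"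
      using ordLess_iff_ordIso_Restr[OF w(1) wr] by blast
    hence "\<rho> \<le>o Restr w (underS w a)" using ordIso_iff_ordLeq by blast
    hence "|Om| \<le>o |Field (Restr w (underS w a))|"
      using card_of_mono2 fr by fastforce
    moreover have "|Field (Restr w (underS w a))| \<le>o |underS w a|"
      by (rule card_of_mono1) (auto simp: Field_def)
    moreover have "|underS w a| \<le>o natLeq" using w a countable_card_le_natLeq by auto
    ultimately have "|Om| \<le>o natLeq" by (meson ordLeq_transitive)
    hence "countable Om" using countable_card_le_natLeq by blast
    thus ?thesis using Om_uncountable by auto
  next
    assume "w \<le>o \<rho>"
    thus ?thesis using card_of_mono2[of w \<rho>] w fr by simp
  qed
qed

lemma small_Un: "|A| \<le>o |Om| \<Longrightarrow> |B| \<le>o |Om| \<Longrightarrow> |A \<union> B| \<le>o |Om|"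
  using card_of_Un_ordLeq_infinite_Field[of "|Om|" A B] Om_infinite
        Field_card_of card_of_Card_order by metis

lemma small_image: "|X| \<le>o |Om| \<Longrightarrow> |h ` X| \<le>o |Om|"
  by (rule ordLeq_transitive[OF card_of_image])

lemma small_underS: "|underS r \<gamma>| \<le>o |Om|"
  using om le_aleph1_small unfolding omega2_order_def by auto

lemma small_bounded: assumes "|X| \<le>o |Om|" shows "\<exists>\<gamma>. \<forall>x\<in>X. lt r x \<gamma>"
proof (rule ccontr)
  assume "\<not> ?thesis"
  hence u: "\<forall>\<gamma>. \<exists>x\<in>X. (\<gamma>,x) \<in> r" using not_le by blast
  have "UNIV \<subseteq> (\<Union>x\<in>X. insert x (underS r x))"
  proof
    fix g assume "g \<in> (UNIV::'a set)"
    obtain x where "x \<in> X" "(g,x) \<in> r" using u by blast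
    thus "g \<in> (\<Union>x\<in>X. insert x (underS r x))" unfolding underS_def by auto
  qed
  moreover have "|\<Union>x\<in>X. insert x (underS r x)| \<le>o |Om|"
  proof (rule card_of_UNION_ordLeq_infinite[OF Om_infinite assms], intro ballI)
    fix x :: 'a
    have "countable {x}" by simp
    hence "|{x}| \<le>o |Om|" using countable_small by blast
    hence "|{x} \<union> underS r x| \<le>o |Om|"
      using card_of_Un_ordLeq_infinite_Field[of "|Om|" "{x}" "underS r x"] small_underS Om_infinite
        Field_card_of card_of_Card_order by metis
    thus "|insert x (underS r x)| \<le>o |Om|" by simp
  qed
  ultimately have "|UNIV::'a set| \<le>o |Om|" by (metis card_of_mono1 ordLeq_transitive)
  then obtain f where f: "inj_on f (UNIV::'a set)" "f ` UNIV \<subseteq> Om" using card_of_ordLeq by metis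
  define w where "w = {(x,y). (f x, f y) \<in> r}"
  have "w = dir_image (Restr r (range f)) (inv f)"
  proof (rule set_eqI, rule iffI)
    fix p assume "p \<in> w"
    then obtain x y where "p = (x,y)" "(f x, f y) \<in> r" unfolding w_def by auto
    thus "p \<in> dir_image (Restr r (range f)) (inv f)" unfolding dir_image_def
      apply (simp only: mem_Collect_eq)
      apply (rule exI[of _ "f x"], rule exI[of _ "f y"])
      using inv_f_f[OF f(1)] by auto
  next
    fix p assume "p \<in> dir_image (Restr r (range f)) (inv f)"
    then obtain x y where "p = (inv f (f x), inv f (f y))" "(f x, f y) \<in> r" unfolding dir_image_def
      by auto
    thus "p \<in> w" unfolding w_def using inv_f_f[OF f(1)] by simp
  qed
  moreover have "Well_order (dir_image (Restr r (range f)) (inv f))"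
  proof (rule Well_order_dir_image)
    show "Well_order (Restr r (range f))" using WO Well_order_Restr by blast
    have "Field (Restr r (range f)) = range f" using WO FU Refl_Field_Restr2[of r "range f"]
      unfolding order_on_defs by auto
    thus "inj_on (inv f) (Field (Restr r (range f)))" using inj_on_inv_into[of "range f" f UNIV] by simp
  qed
  ultimately have "Well_order w" by simp
  moreover have "Field w = UNIV" unfolding w_def Field_def using rrefl by auto
  moreover have "\<forall>x. countable (underS w x)"
  proof
    fix x
    have "underS w x \<subseteq> inv f ` underS r (f x)"
    proof
      fix y assume "y \<in> underS w x"
      hence "f y \<in> underS r (f x)" unfolding w_def underS_def using injD[OF f(1)] by auto
      thus "y \<in> inv f ` underS r (f x)" using f(1) by (metis image_eqI inv_f_f)
    qed
    moreover have "countable (underS r (f x))" using f(2) unfolding Om_def by auto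
    ultimately show "countable (underS w x)" by (rule countable_subset[OF _ countable_image])
  qed
  ultimately have "le_aleph1 (UNIV::'a set)" unfolding le_aleph1_def by blast
  thus False using le_aleph1_r by blast
qed

end

lemma clubP_gen:
  assumes H: "\<forall>p q. lt r p \<alpha> \<longrightarrow> lt r q \<alpha> \<longrightarrow> countable (H p q) \<and> H p q \<subseteq> underS r \<alpha>"
  shows "club_P r \<alpha> {x \<in> Pw1 r \<alpha>. \<forall>p\<in>x. \<forall>q\<in>x. H p q \<subseteq> x}"
proof -
  have uS': "\<And>x. x \<in> underS r \<alpha> \<longleftrightarrow> lt r x \<alpha>" unfolding underS_def lt_def by auto
  have chain: "\<Union>(range Y) \<in> Pw1 r \<alpha> \<and> (\<forall>p\<in>\<Union>(range Y). \<forall>q\<in>\<Union>(range Y). H p q \<subseteq> \<Union>(range Y))"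
    if Yp: "\<And>n. Y n \<in> Pw1 r \<alpha>" and Ym: "\<And>n. Y n \<subseteq> Y (Suc n)"
      and Yc: "\<And>n p q. p \<in> Y n \<Longrightarrow> q \<in> Y n \<Longrightarrow> H p q \<subseteq> \<Union>(range Y)" for Y
  proof
    show "\<Union>(range Y) \<in> Pw1 r \<alpha>" using Yp unfolding Pw1_def by auto
    show "\<forall>p\<in>\<Union>(range Y). \<forall>q\<in>\<Union>(range Y). H p q \<subseteq> \<Union>(range Y)"
    proof (intro ballI)
      fix p q assume "p \<in> \<Union>(range Y)" "q \<in> \<Union>(range Y)"
      then obtain n m where nm: "p \<in> Y n" "q \<in> Y m" by auto
      have "Y n \<subseteq> Y (max n m)" "Y m \<subseteq> Y (max n m)"
        using lift_Suc_mono_le[of Y, OF Ym] by auto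
      thus "H p q \<subseteq> \<Union>(range Y)" using Yc[of p "max n m" q] nm by auto
    qed
  qed
  show ?thesis unfolding club_P_def
  proof (intro conjI allI impI ballI)
    show "{x \<in> Pw1 r \<alpha>. \<forall>p\<in>x. \<forall>q\<in>x. H p q \<subseteq> x} \<subseteq> Pw1 r \<alpha>" by auto
  next
    fix y assume y: "y \<in> Pw1 r \<alpha>"
    define Y where "Y = rec_nat y (\<lambda>_ Z. Z \<union> (\<Union>p\<in>Z. \<Union>q\<in>Z. H p q))"
    have Y0: "Y 0 = y" unfolding Y_def by simp
    have YS: "Y (Suc n) = Y n \<union> (\<Union>p\<in>Y n. \<Union>q\<in>Y n. H p q)" for n unfolding Y_def by simp
    have Yp: "Y n \<in> Pw1 r \<alpha>" for n
    proof (induction n)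
      case 0 thus ?case using y Y0 by simp
    next
      case (Suc n)
      hence c: "countable (Y n)" "Y n \<subseteq> underS r \<alpha>" unfolding Pw1_def by auto
      have "\<forall>p\<in>Y n. \<forall>q\<in>Y n. countable (H p q) \<and> H p q \<subseteq> underS r \<alpha>"
        using H c(2) uS' by blast
      thus ?case unfolding YS Pw1_def using c by auto
    qed
    have Ym: "Y n \<subseteq> Y (Suc n)" for n using YS by auto
    have Yc: "H p q \<subseteq> \<Union>(range Y)" if "p \<in> Y n" "q \<in> Y n" for n p q
    proof -
      have "H p q \<subseteq> Y (Suc n)" using that YS by blast
      thus ?thesis by blast
    qed
    have "\<Union>(range Y) \<in> Pw1 r \<alpha> \<and> (\<forall>p\<in>\<Union>(range Y). \<forall>q\<in>\<Union>(range Y). H p q \<subseteq> \<Union>(range Y))"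
      by (rule chain[where Y=Y]) (rule Yp, rule Ym, rule Yc)
    hence "\<Union>(range Y) \<in> {x \<in> Pw1 r \<alpha>. \<forall>p\<in>x. \<forall>q\<in>x. H p q \<subseteq> x}" by simp
    moreover have "y \<subseteq> \<Union>(range Y)" using Y0 by auto
    ultimately show "\<exists>ya\<in>{x \<in> Pw1 r \<alpha>. \<forall>p\<in>x. \<forall>q\<in>x. H p q \<subseteq> x}. y \<subseteq> ya" by blast
  next
    fix f :: "nat \<Rightarrow> 'a set"
    assume f: "(\<forall>n. f n \<in> {x \<in> Pw1 r \<alpha>. \<forall>p\<in>x. \<forall>q\<in>x. H p q \<subseteq> x}) \<and> (\<forall>n. f n \<subseteq> f (Suc n))"
    have f1: "f n \<in> Pw1 r \<alpha>" and f2: "f n \<subseteq> f (Suc n)" for n using f by auto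
    have f3: "H p q \<subseteq> f n" if "p \<in> f n" "q \<in> f n" for n p q
      using f that by simp
    have f4: "H p q \<subseteq> \<Union>(range f)" if "p \<in> f n" "q \<in> f n" for n p q
      using f3[OF that] by auto
    have "\<Union>(range f) \<in> Pw1 r \<alpha> \<and> (\<forall>p\<in>\<Union>(range f). \<forall>q\<in>\<Union>(range f). H p q \<subseteq> \<Union>(range f))"
      by (rule chain[where Y=f]) (rule f1, rule f2, rule f4)
    thus "\<Union>(range f) \<in> {x \<in> Pw1 r \<alpha>. \<forall>p\<in>x. \<forall>q\<in>x. H p q \<subseteq> x}"
      by simp
  qed
qed

context W begin


lemma club_h: assumes C: "club r C" shows "club r (C \<inter> {\<alpha>. \<forall>\<beta>. lt r \<beta> \<alpha> \<longrightarrow> lt r (h \<beta>) \<alpha>})"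
proof -
  have Cu: "\<forall>\<beta>. \<exists>\<gamma>\<in>C. lt r \<beta> \<gamma>" and Cc: "closed r C" using C unfolding club_def unbounded_def by auto
  have Nex: "\<exists>\<gamma>. \<gamma> \<in> C \<and> lt r b \<gamma> \<and> (\<forall>\<xi>. (\<xi>,b) \<in> r \<longrightarrow> lt r (h \<xi>) \<gamma>)" for b
  proof -
    have "|insert b (underS r b)| \<le>o |Om|"
      using small_Un[OF countable_small[of "{b}"] small_underS[of b]] by simp
    hence "|h ` insert b (underS r b)| \<le>o |Om|" by (rule small_image)
    then obtain t where t: "\<forall>x\<in>h ` insert b (underS r b). lt r x t" using small_bounded by blast
    define m where "m = (if (t,b) \<in> r then b else t)"
    obtain \<gamma> where g: "\<gamma> \<in> C" "lt r m \<gamma>" using Cu by blast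
    have "lt r b \<gamma> \<and> lt r t \<gamma>"
    proof (cases "(t,b) \<in> r")
      case True
      hence "m = b" unfolding m_def by simp
      thus ?thesis using g(2) le_lt_trans[OF True] by simp
    next
      case False
      hence "m = t" unfolding m_def by simp
      thus ?thesis using g(2) lt_trans[OF not_le[OF False]] by simp
    qed
    hence "lt r b \<gamma>" "lt r t \<gamma>" by auto
    moreover have "\<forall>\<xi>. (\<xi>,b) \<in> r \<longrightarrow> lt r (h \<xi>) \<gamma>"
    proof (intro allI impI)
      fix \<xi> assume "(\<xi>,b) \<in> r"
      hence "\<xi> \<in> insert b (underS r b)" unfolding underS_def by auto
      hence "lt r (h \<xi>) t" using t by auto
      thus "lt r (h \<xi>) \<gamma>" using \<open>lt r t \<gamma>\<close> lt_trans by blast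
    qed
    ultimately show ?thesis using g by blast
  qed
  define N where "N b = (SOME \<gamma>. \<gamma> \<in> C \<and> lt r b \<gamma> \<and> (\<forall>\<xi>. (\<xi>,b) \<in> r \<longrightarrow> lt r (h \<xi>) \<gamma>))" for b
  have N: "N b \<in> C" "lt r b (N b)" "\<And>\<xi>. (\<xi>,b) \<in> r \<Longrightarrow> lt r (h \<xi>) (N b)" for b
    using someI_ex[OF Nex[of b]] unfolding N_def by blast+
  show ?thesis unfolding club_def
  proof
    show "unbounded r (C \<inter> {\<alpha>. \<forall>\<beta>. lt r \<beta> \<alpha> \<longrightarrow> lt r (h \<beta>) \<alpha>})" unfolding unbounded_def
    proof
      fix \<beta>0
      define B where "B n = (N ^^ n) \<beta>0" for n
      have B0: "B 0 = \<beta>0" and BS: "B (Suc n) = N (B n)" for n unfolding B_def by auto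
      have "|range B| \<le>o |Om|" by (rule countable_small) simp
      then obtain t where t: "\<forall>x\<in>range B. lt r x t" using small_bounded by blast
      then obtain \<alpha> where a: "\<alpha> \<in> {t. \<forall>n. lt r (B n) t}" "\<forall>y\<in>{t. \<forall>n. lt r (B n) t}. (\<alpha>, y) \<in> r"
        using exmin[of t "{t. \<forall>n. lt r (B n) t}"] by blast
      have below: "\<exists>n. (\<beta>, B n) \<in> r" if "lt r \<beta> \<alpha>" for \<beta>
      proof (rule ccontr)
        assume "\<not> ?thesis"
        hence "\<beta> \<in> {t. \<forall>n. lt r (B n) t}" using not_le by blast
        hence "(\<alpha>, \<beta>) \<in> r" using a by blast
        thus False using that lt_not_le by blast
      qed
      have aB: "lt r (B n) \<alpha>" for n using a by auto
      have "\<alpha> \<in> C"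
      proof (rule Cc[unfolded closed_def, rule_format], intro conjI ballI)
        show "underS r \<alpha> \<noteq> {}" using aB[of 0] uS by blast
        fix \<beta> assume "\<beta> \<in> underS r \<alpha>"
        then obtain n where "(\<beta>, B n) \<in> r" using below uS by blast
        hence "lt r \<beta> (B (Suc n))" using N(2)[of "B n"] BS le_lt_trans by metis
        thus "\<exists>\<gamma>\<in>C. lt r \<beta> \<gamma> \<and> lt r \<gamma> \<alpha>" using N(1) BS aB[of "Suc n"] by metis
      qed
      moreover have "\<forall>\<beta>. lt r \<beta> \<alpha> \<longrightarrow> lt r (h \<beta>) \<alpha>"
      proof (intro allI impI)
        fix \<xi> assume "lt r \<xi> \<alpha>"
        then obtain n where "(\<xi>, B n) \<in> r" using below by blast
        hence "lt r (h \<xi>) (B (Suc n))" using N(3) BS by metis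
        thus "lt r (h \<xi>) \<alpha>" using aB[of "Suc n"] lt_trans by blast
      qed
      moreover have "lt r \<beta>0 \<alpha>" using aB[of 0] B0 by simp
      ultimately show "\<exists>\<gamma>\<in>C \<inter> {\<alpha>. \<forall>\<beta>. lt r \<beta> \<alpha> \<longrightarrow> lt r (h \<beta>) \<alpha>}. lt r \<beta>0 \<gamma>" by blast
    qed
  next
    show "closed r (C \<inter> {\<alpha>. \<forall>\<beta>. lt r \<beta> \<alpha> \<longrightarrow> lt r (h \<beta>) \<alpha>})" unfolding closed_def
    proof (intro allI impI)
      fix \<alpha> assume a: "underS r \<alpha> \<noteq> {} \<and> (\<forall>\<beta>\<in>underS r \<alpha>. \<exists>\<gamma>\<in>C \<inter> {\<alpha>. \<forall>\<beta>. lt r \<beta> \<alpha> \<longrightarrow> lt r (h \<beta>) \<alpha>}. lt r \<beta> \<gamma> \<and> lt r \<gamma> \<alpha>)"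
      have "\<alpha> \<in> C" using Cc a unfolding closed_def by blast
      moreover have "\<forall>\<beta>. lt r \<beta> \<alpha> \<longrightarrow> lt r (h \<beta>) \<alpha>"
      proof (intro allI impI)
        fix \<xi> assume "lt r \<xi> \<alpha>"
        then obtain \<gamma> where "lt r \<xi> \<gamma>" "lt r \<gamma> \<alpha>" "\<forall>\<beta>. lt r \<beta> \<gamma> \<longrightarrow> lt r (h \<beta>) \<gamma>"
          using a uS by blast
        thus "lt r (h \<xi>) \<alpha>" using lt_trans by blast
      qed
      ultimately show "\<alpha> \<in> C \<inter> {\<alpha>. \<forall>\<beta>. lt r \<beta> \<alpha> \<longrightarrow> lt r (h \<beta>) \<alpha>}" by blast
    qed
  qed
qed

end

definition Fp :: "'a rel \<Rightarrow> ('a \<Rightarrow> 'a set) \<Rightarrow> ('a \<Rightarrow> 'a \<Rightarrow> 'a) \<Rightarrow> 'a \<Rightarrow> 'a \<Rightarrow> 'a set" where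
  "Fp r a e j \<delta> = (\<Union>\<gamma>\<in>a j. {\<beta>. lt r \<beta> \<gamma> \<and> e \<gamma> \<beta> \<in> underS r \<delta>})"

context W begin

lemma le_of_not_lt: "\<not> lt r x y \<Longrightarrow> (y,x) \<in> r"
  using not_le by blast

lemma cof_unc: "cof_omega1 r \<alpha> \<Longrightarrow> uncountable (underS r \<alpha>)"
proof -
  assume a: "cof_omega1 r \<alpha>"
  have "cofinal_in r (underS r \<alpha>) \<alpha>" unfolding cofinal_in_def using rrefl by auto
  thus ?thesis using a unfolding cof_omega1_def by blast
qed

lemma cof_bdd: assumes "cof_omega1 r \<alpha>" "countable x" "x \<subseteq> underS r \<alpha>"
  shows "\<exists>\<beta>0. lt r \<beta>0 \<alpha> \<and> (\<forall>y\<in>x. lt r y \<beta>0)"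
proof -
  have "\<not> cofinal_in r x \<alpha>" using assms unfolding cof_omega1_def by blast
  then obtain \<beta> where "\<beta> \<in> underS r \<alpha>" "\<forall>\<gamma>\<in>x. (\<beta>,\<gamma>) \<notin> r"
    using assms(3) unfolding cofinal_in_def by blast
  thus ?thesis using not_le uS by blast
qed

lemma cof_limit: assumes a: "cof_omega1 r \<alpha>" shows "limit r \<alpha>"
  unfolding limit_def
proof (intro conjI ballI)
  show "underS r \<alpha> \<noteq> {}" using cof_unc[OF a] by auto
  fix \<beta> assume b: "\<beta> \<in> underS r \<alpha>"
  show "\<exists>\<gamma>. lt r \<beta> \<gamma> \<and> lt r \<gamma> \<alpha>"
  proof (rule ccontr)
    assume n: "\<not> ?thesis"
    have "cofinal_in r {\<beta>} \<alpha>" unfolding cofinal_in_def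
    proof (intro conjI ballI)
      show "{\<beta>} \<subseteq> underS r \<alpha>" using b by auto
      fix \<beta>' assume "\<beta>' \<in> underS r \<alpha>"
      hence "lt r \<beta>' \<alpha>" by (simp add: uS)
      hence "(\<beta>', \<beta>) \<in> r" using n not_le by blast
      thus "\<exists>\<gamma>\<in>{\<beta>}. (\<beta>', \<gamma>) \<in> r" by blast
    qed
    thus False using a unfolding cof_omega1_def by auto
  qed
qed

lemma Om_sub: assumes a: "cof_omega1 r \<alpha>" shows "Om \<subseteq> underS r \<alpha>"
proof
  fix \<xi> assume x: "\<xi> \<in> Om"
  show "\<xi> \<in> underS r \<alpha>"
  proof (rule ccontr)
    assume "\<xi> \<notin> underS r \<alpha>"
    hence "(\<alpha>, \<xi>) \<in> r" using uS not_le by blast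
    hence "underS r \<alpha> \<subseteq> underS r \<xi>" using lt_le_trans uS by blast
    hence "countable (underS r \<alpha>)" using x countable_subset unfolding Om_def by auto
    thus False using cof_unc[OF a] by simp
  qed
qed

lemma key:
  assumes cof: "cof_omega1 r \<alpha>"
    and cf: "cofinal_in r c \<alpha>"
    and ap: "\<forall>\<beta>\<in>underS r \<alpha>. c \<inter> underS r \<beta> \<in> a ` underS r \<alpha>"
    and ac: "\<forall>i. countable (a i)"
    and e: "\<forall>\<gamma>. inj_on (e \<gamma>) (underS r \<gamma>) \<and> e \<gamma> ` underS r \<gamma> \<subseteq> Om"
  shows "\<exists>K. club_P r \<alpha> K \<and> (\<forall>x\<in>K. \<exists>j \<delta>. lt r j \<alpha> \<and> \<delta> \<in> Om \<and> x = Fp r a e j \<delta>)"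
proof -
  have lim: "limit r \<alpha>" by (rule cof_limit[OF cof])
  have OmS: "Om \<subseteq> underS r \<alpha>" by (rule Om_sub[OF cof])
  have cS: "c \<subseteq> underS r \<alpha>" using cf unfolding cofinal_in_def by auto
  have exg: "\<exists>\<gamma>. \<gamma> \<in> c \<and> lt r p \<gamma>" if "lt r p \<alpha>" for p
  proof -
    have "p \<in> underS r \<alpha>" using that uS by blast
    then obtain \<gamma>' where "lt r p \<gamma>'" "lt r \<gamma>' \<alpha>" using lim unfolding limit_def by blast
    moreover have "\<gamma>' \<in> underS r \<alpha>" using calculation uS by blast
    moreover then obtain \<gamma> where "\<gamma> \<in> c" "(\<gamma>', \<gamma>) \<in> r" using cf unfolding cofinal_in_def by blast
    ultimately show ?thesis using lt_le_trans by blast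
  qed
  define H where "H p q = (if p \<in> Om then underS r p else {}) \<union> (if lt r q p then {e p q} else {})
     \<union> {\<beta>. lt r \<beta> p \<and> e p \<beta> = q} \<union> {SOME \<gamma>. \<gamma> \<in> c \<and> lt r p \<gamma>} \<union> (if p \<in> c then c \<inter> underS r p else {})"
    for p q
  have Hok: "\<forall>p q. lt r p \<alpha> \<longrightarrow> lt r q \<alpha> \<longrightarrow> countable (H p q) \<and> H p q \<subseteq> underS r \<alpha>"
  proof (intro allI impI)
    fix p q assume p: "lt r p \<alpha>" and q: "lt r q \<alpha>"
    have pS: "underS r p \<subseteq> underS r \<alpha>" using p lt_trans uS by blast
    have h1: "countable (if p \<in> Om then underS r p else {})" unfolding Om_def by auto
    have h2: "(if lt r q p then {e p q} else {}) \<subseteq> underS r \<alpha>"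
    proof (cases "lt r q p")
      case True
      hence "q \<in> underS r p" using uS by blast
      hence "e p q \<in> Om" using e by blast
      thus ?thesis using True OmS by auto
    qed simp
    have h3: "{\<beta>. lt r \<beta> p \<and> e p \<beta> = q} \<subseteq> inv_into (underS r p) (e p) ` {q}"
    proof
      fix \<beta> assume "\<beta> \<in> {\<beta>. lt r \<beta> p \<and> e p \<beta> = q}"
      hence "\<beta> \<in> underS r p" "e p \<beta> = q" by (auto simp: uS)
      thus "\<beta> \<in> inv_into (underS r p) (e p) ` {q}" using e inv_into_f_f by fastforce
    qed
    have h3': "countable {\<beta>. lt r \<beta> p \<and> e p \<beta> = q}" by (rule countable_subset[OF h3]) simp
    have h4: "(SOME \<gamma>. \<gamma> \<in> c \<and> lt r p \<gamma>) \<in> c" using someI_ex[OF exg[OF p]] by blast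
    have h5: "countable (c \<inter> underS r p)"
    proof -
      have "p \<in> underS r \<alpha>" using p uS by blast
      then obtain i where "c \<inter> underS r p = a i" using ap by blast
      thus ?thesis using ac by simp
    qed
    show "countable (H p q) \<and> H p q \<subseteq> underS r \<alpha>"
    proof
      show "countable (H p q)" unfolding H_def using h1 h3' h5 by auto
      have h3s: "{\<beta>. lt r \<beta> p \<and> e p \<beta> = q} \<subseteq> underS r p" using uS by blast
      have h6: "c \<inter> underS r p \<subseteq> underS r \<alpha>" using cS by blast
      show "H p q \<subseteq> underS r \<alpha>" unfolding H_def using pS h2 h3s h4 cS h6
        by (simp only: Un_subset_iff) (auto split: if_splits)
    qed
  qed
  define K where "K = {x \<in> Pw1 r \<alpha>. \<forall>p\<in>x. \<forall>q\<in>x. H p q \<subseteq> x}"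
  have clubK: "club_P r \<alpha> K" unfolding K_def by (rule clubP_gen[OF Hok])
  have main: "\<exists>j \<delta>. lt r j \<alpha> \<and> \<delta> \<in> Om \<and> x = Fp r a e j \<delta>" if xK: "x \<in> K" for x
  proof -
    have xs: "x \<subseteq> underS r \<alpha>" "countable x" using xK unfolding K_def Pw1_def by auto
    have cl: "H p q \<subseteq> x" if "p \<in> x" "q \<in> x" for p q using xK that unfolding K_def by blast
    have C1: "underS r \<xi> \<subseteq> x" if "\<xi> \<in> x" "\<xi> \<in> Om" for \<xi>
      using cl[OF that(1) that(1)] that unfolding H_def by auto
    have C2: "e \<gamma> \<beta> \<in> x" if "\<gamma> \<in> x" "\<beta> \<in> x" "lt r \<beta> \<gamma>" for \<gamma> \<beta>
      using cl[OF that(1) that(2)] that unfolding H_def by auto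
    have C3: "\<beta> \<in> x" if "\<gamma> \<in> x" "lt r \<beta> \<gamma>" "e \<gamma> \<beta> \<in> x" for \<gamma> \<beta>
      using cl[OF that(1) that(3)] that unfolding H_def by auto
    have C4: "\<exists>\<gamma>\<in>x. \<gamma> \<in> c \<and> lt r y \<gamma>" if "y \<in> x" for y
    proof -
      have "lt r y \<alpha>" using that xs uS by blast
      hence "(SOME \<gamma>. \<gamma> \<in> c \<and> lt r y \<gamma>) \<in> c \<and> lt r y (SOME \<gamma>. \<gamma> \<in> c \<and> lt r y \<gamma>)"
        using someI_ex[OF exg] by blast
      moreover have "(SOME \<gamma>. \<gamma> \<in> c \<and> lt r y \<gamma>) \<in> x" using cl[OF that that] unfolding H_def by auto
      ultimately show ?thesis by blast
    qed
    have C5: "c \<inter> underS r \<gamma> \<subseteq> x" if "\<gamma> \<in> x" "\<gamma> \<in> c" for \<gamma>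
      using cl[OF that(1) that(1)] that unfolding H_def by auto
    obtain \<beta>0 where b0: "lt r \<beta>0 \<alpha>" "\<forall>y\<in>x. lt r y \<beta>0" using cof_bdd[OF cof xs(2) xs(1)] by blast
    have "\<beta>0 \<in> underS r \<alpha>" using b0 uS by blast
    then obtain \<gamma>0 where g0: "\<gamma>0 \<in> c" "(\<beta>0, \<gamma>0) \<in> r" using cf unfolding cofinal_in_def by blast
    have g0B: "\<gamma>0 \<in> {\<gamma>\<in>c. \<forall>y\<in>x. lt r y \<gamma>}" using g0 b0 lt_le_trans[of _ \<beta>0 \<gamma>0] by blast
    obtain \<beta> where bB: "\<beta> \<in> {\<gamma>\<in>c. \<forall>y\<in>x. lt r y \<gamma>}" and bmin: "\<forall>y\<in>{\<gamma>\<in>c. \<forall>y\<in>x. lt r y \<gamma>}. (\<beta>, y) \<in> r"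
      using exmin[OF g0B] by blast
    have xc: "x \<inter> c = c \<inter> underS r \<beta>"
    proof
      show "x \<inter> c \<subseteq> c \<inter> underS r \<beta>" using bB uS by auto
      show "c \<inter> underS r \<beta> \<subseteq> x \<inter> c"
      proof
        fix g assume g: "g \<in> c \<inter> underS r \<beta>"
        hence gl: "lt r g \<beta>" "g \<in> c" using uS by auto
        have "g \<notin> {\<gamma>\<in>c. \<forall>y\<in>x. lt r y \<gamma>}" using bmin gl(1) lt_not_le[of g \<beta>] by blast
        then obtain y where y: "y \<in> x" "\<not> lt r y g" using gl by blast
        hence "(g, y) \<in> r" using le_of_not_lt by blast
        moreover obtain \<gamma> where "\<gamma> \<in> x" "\<gamma> \<in> c" "lt r y \<gamma>" using C4[OF y(1)] by blast
        ultimately have "lt r g \<gamma>" "\<gamma> \<in> x" "\<gamma> \<in> c" using le_lt_trans[of g y \<gamma>] by auto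
        hence "g \<in> c \<inter> underS r \<gamma>" using gl uS by blast
        thus "g \<in> x \<inter> c" using C5[OF \<open>\<gamma> \<in> x\<close> \<open>\<gamma> \<in> c\<close>] gl by blast
      qed
    qed
    have "\<beta> \<in> underS r \<alpha>" using bB cS by auto
    hence "c \<inter> underS r \<beta> \<in> a ` underS r \<alpha>" using ap by blast
    then obtain j where j: "j \<in> underS r \<alpha>" "a j = x \<inter> c" unfolding xc[symmetric] by blast
    have "\<not> Om \<subseteq> x" using Om_uncountable xs(2) countable_subset by blast
    then obtain z where "z \<in> Om - x" by blast
    then obtain \<delta> where dOm: "\<delta> \<in> Om - x" and dmin: "\<forall>y\<in>Om - x. (\<delta>, y) \<in> r" using exmin[of z "Om - x"] by blast
    have xO: "x \<inter> Om = underS r \<delta>"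
    proof
      show "x \<inter> Om \<subseteq> underS r \<delta>"
      proof
        fix \<xi> assume xi: "\<xi> \<in> x \<inter> Om"
        show "\<xi> \<in> underS r \<delta>"
        proof (rule ccontr)
          assume "\<xi> \<notin> underS r \<delta>"
          hence "(\<delta>, \<xi>) \<in> r" using uS le_of_not_lt by blast
          moreover have "\<delta> \<noteq> \<xi>" using dOm xi by auto
          ultimately have "\<delta> \<in> underS r \<xi>" unfolding underS_def by auto
          thus False using C1 xi dOm by blast
        qed
      qed
      show "underS r \<delta> \<subseteq> x \<inter> Om"
      proof
        fix \<xi> assume xi: "\<xi> \<in> underS r \<delta>"
        hence l: "lt r \<xi> \<delta>" by (simp add: uS)
        hence "\<xi> \<in> Om" using Om_down dOm by blast
        moreover have "\<xi> \<in> x"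
        proof (rule ccontr)
          assume "\<xi> \<notin> x"
          hence "(\<delta>, \<xi>) \<in> r" using dmin \<open>\<xi> \<in> Om\<close> by blast
          thus False using l lt_not_le by blast
        qed
        ultimately show "\<xi> \<in> x \<inter> Om" by blast
      qed
    qed
    have "x = Fp r a e j \<delta>"
    proof
      show "x \<subseteq> Fp r a e j \<delta>"
      proof
        fix y assume y: "y \<in> x"
        obtain \<gamma> where g: "\<gamma> \<in> x" "\<gamma> \<in> c" "lt r y \<gamma>" using C4[OF y] by blast
        have "e \<gamma> y \<in> x" using C2 g y by blast
        moreover have "e \<gamma> y \<in> Om" using e g(3) uS by blast
        ultimately have "e \<gamma> y \<in> underS r \<delta>" using xO by blast
        moreover have "\<gamma> \<in> a j" using j g by blast
        ultimately show "y \<in> Fp r a e j \<delta>" unfolding Fp_def using g by blast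
      qed
      show "Fp r a e j \<delta> \<subseteq> x"
      proof
        fix y assume "y \<in> Fp r a e j \<delta>"
        then obtain \<gamma> where g: "\<gamma> \<in> a j" "lt r y \<gamma>" "e \<gamma> y \<in> underS r \<delta>" unfolding Fp_def by blast
        have "\<gamma> \<in> x" using g j by blast
        moreover have "e \<gamma> y \<in> x" using g xO by blast
        ultimately show "y \<in> x" using C3 g by blast
      qed
    qed
    thus ?thesis using j dOm uS by blast
  qed
  show ?thesis using clubK main by blast
qed

end

context W begin

lemma final:
  assumes dss: "disjoint_stationary_sequence r S s"
  shows "\<not> approachability_omega1 r"
proof
  assume "approachability_omega1 r"
  then obtain a C where ac: "\<forall>i. countable (a i)" and clubC: "club r C" and
    apC: "\<forall>\<alpha>\<in>C. limit r \<alpha> \<longrightarrow> (\<exists>c. cofinal_in r c \<alpha> \<and>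
                ((cof_omega r \<alpha> \<and> otp_omega r c) \<or> (cof_omega1 r \<alpha> \<and> otp_omega1 r c)) \<and>
                (\<forall>\<beta>\<in>underS r \<alpha>. c \<inter> underS r \<beta> \<in> a ` underS r \<alpha>))"
    unfolding approachability_omega1_def by blast
  have Scof: "S \<subseteq> {\<alpha>. cof_omega1 r \<alpha>}" and Sst: "stationary r S"
    and sst: "\<forall>\<alpha>\<in>S. stationary_P r \<alpha> (s \<alpha>)"
    and sdis: "\<forall>\<alpha>\<in>S. \<forall>\<beta>\<in>S. lt r \<alpha> \<beta> \<longrightarrow> s \<alpha> \<inter> s \<beta> = {}"
    using dss unfolding disjoint_stationary_sequence_def by auto
  have "\<forall>\<gamma>. \<exists>f. inj_on f (underS r \<gamma>) \<and> f ` underS r \<gamma> \<subseteq> Om"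
    using small_underS card_of_ordLeq by blast
  then obtain e where e: "\<forall>\<gamma>. inj_on (e \<gamma>) (underS r \<gamma>) \<and> e \<gamma> ` underS r \<gamma> \<subseteq> Om"
    by metis
  have ex: "\<exists>p. lt r (fst p) \<alpha> \<and> snd p \<in> Om \<and> Fp r a e (fst p) (snd p) \<in> s \<alpha>"
    if aSC: "\<alpha> \<in> S \<inter> C" for \<alpha>
  proof -
    have cof: "cof_omega1 r \<alpha>" using aSC Scof by auto
    have "limit r \<alpha>" by (rule cof_limit[OF cof])
    then obtain c where cf: "cofinal_in r c \<alpha>" and ap: "\<forall>\<beta>\<in>underS r \<alpha>. c \<inter> underS r \<beta> \<in> a ` underS r \<alpha>"
      using apC aSC by blast
    obtain K where K: "club_P r \<alpha> K" "\<forall>x\<in>K. \<exists>j \<delta>. lt r j \<alpha> \<and> \<delta> \<in> Om \<and> x = Fp r a e j \<delta>"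
      using key[OF cof cf ap ac e] by blast
    have "s \<alpha> \<inter> K \<noteq> {}" using sst aSC K(1) unfolding stationary_P_def by blast
    then obtain x where "x \<in> s \<alpha>" "x \<in> K" by blast
    then obtain j \<delta> where "lt r j \<alpha>" "\<delta> \<in> Om" "Fp r a e j \<delta> \<in> s \<alpha>" using K(2) by metis
    thus ?thesis by (intro exI[of _ "(j, \<delta>)"]) simp
  qed
  then obtain JD where JD: "\<forall>\<alpha>\<in>S \<inter> C. lt r (fst (JD \<alpha>)) \<alpha> \<and> snd (JD \<alpha>) \<in> Om \<and> Fp r a e (fst (JD \<alpha>)) (snd (JD \<alpha>)) \<in> s \<alpha>"
    using bchoice[of "S \<inter> C"] by (metis (no_types, lifting))
  define T where "T j = {\<alpha> \<in> S \<inter> C. fst (JD \<alpha>) = j}" for j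
  have smallT: "|T j| \<le>o |Om|" for j
  proof -
    have "inj_on (\<lambda>\<alpha>. snd (JD \<alpha>)) (T j)"
    proof (rule inj_onI)
      fix \<alpha> \<alpha>' assume a: "\<alpha> \<in> T j" "\<alpha>' \<in> T j" "snd (JD \<alpha>) = snd (JD \<alpha>')"
      hence "JD \<alpha> = JD \<alpha>'" unfolding T_def by (simp add: prod_eq_iff)
      have m: "\<alpha> \<in> S \<inter> C" "\<alpha>' \<in> S \<inter> C" using a(1,2) unfolding T_def by auto
      have "Fp r a e (fst (JD \<alpha>)) (snd (JD \<alpha>)) \<in> s \<alpha>" using JD m(1) by blast
      moreover have "Fp r a e (fst (JD \<alpha>')) (snd (JD \<alpha>')) \<in> s \<alpha>'" using JD m(2) by blast
      ultimately have "Fp r a e (fst (JD \<alpha>)) (snd (JD \<alpha>)) \<in> s \<alpha> \<inter> s \<alpha>'" using \<open>JD \<alpha> = JD \<alpha>'\<close> by simp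
      hence ne: "s \<alpha> \<inter> s \<alpha>' \<noteq> {}" by blast
      show "\<alpha> = \<alpha>'"
      proof (rule ccontr)
        assume "\<alpha> \<noteq> \<alpha>'"
        hence "lt r \<alpha> \<alpha>' \<or> lt r \<alpha>' \<alpha>" using rtotal unfolding lt_def by blast
        thus False using sdis a(1,2) ne unfolding T_def by blast
      qed
    qed
    moreover have "(\<lambda>\<alpha>. snd (JD \<alpha>)) ` T j \<subseteq> Om" using JD unfolding T_def by auto
    ultimately show ?thesis using card_of_ordLeq by blast
  qed
  have "\<forall>j. \<exists>t. \<forall>\<alpha>\<in>T j. lt r \<alpha> t" using small_bounded smallT by blast
  then obtain g where g: "\<forall>j. \<forall>\<alpha>\<in>T j. lt r \<alpha> (g j)" by metis
  have "club r (C \<inter> {\<alpha>. \<forall>\<beta>. lt r \<beta> \<alpha> \<longrightarrow> lt r (g \<beta>) \<alpha>})" by (rule club_h[OF clubC])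
  hence "S \<inter> (C \<inter> {\<alpha>. \<forall>\<beta>. lt r \<beta> \<alpha> \<longrightarrow> lt r (g \<beta>) \<alpha>}) \<noteq> {}" using Sst unfolding stationary_def by blast
  then obtain \<alpha> where aS: "\<alpha> \<in> S" "\<alpha> \<in> C" and aD: "\<forall>\<beta>. lt r \<beta> \<alpha> \<longrightarrow> lt r (g \<beta>) \<alpha>" by blast
  define j where "j = fst (JD \<alpha>)"
  have "lt r j \<alpha>" using JD aS unfolding j_def by blast
  hence l1: "lt r (g j) \<alpha>" using aD by blast
  have "\<alpha> \<in> T j" unfolding T_def j_def using aS by blast
  hence "lt r \<alpha> (g j)" using g by blast
  thus False using l1 lt_trans lt_irrefl by blast
qed

end

theorem corollary1p6:
  fixes r :: "'a rel"
  assumes "omega2_order r"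
    and "\<exists>S s. disjoint_stationary_sequence r S s"
  shows "\<not> approachability_omega1 r"
proof -
  interpret W r using assms(1) by unfold_locales
  from assms(2) obtain S s where "disjoint_stationary_sequence r S s" by blast
  thus ?thesis by (rule final)
qed

end
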